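(* Let $D$ be a drawing in $[0,a]\times[0,b]$ whose nodes are all of the eleven types listed in the context, let $\ell$ be its number of segments, and write $N_\ast$ for the number of nodes of type $\ast$. Then (i) $2\ell=(N_{VE}+N_{VX}+2N_{VT}+3N_{VS}+3N_{VC})+(N_{HE}+N_{HX}+2N_{HT}+3N_{HS}+3N_{HC})+4N_{CR}$; (ii) $N_{VE}+N_{HS}+N_{HT}=N_{VX}+N_{HC}+N_{VT}$ and $N_{HE}+N_{VS}+N_{VT}=N_{HX}+N_{VC}+N_{HT}$.
   Context: A drawing in the box $[0,a]\times[0,b]$ is a finite collection of weighted segments $((x_-,y_-),(x_+,y_+),s)$, each vertical ($x_-=x_+$, $y_-<y_+$, traversed upward) or horizontal ($y_-=y_+$, $x_-<x_+$, traversed rightward), with real intensity $s$, whose endpoints are nodes, satisfying Kirchhoff's law at every interior node (sum of intensities of segments entering from south and west equals sum of those leaving to north and east). Node types: vertical entry (VE): a point $(x,0)$ where a vertical segment starts; vertical exit (VX): a point $(x,b)$ where a vertical segment ends; vertical split (VS): a point where exactly three segments meet, from the south, to the north and to the east; vertical turn (VT): a point where exactly a segment from the south and a segment to the east meet; vertical coalescence (VC): exactly three segments from the west, from the south and to the north; horizontal entry (HE): a point $(0,y)$ where a horizontal segment starts; horizontal exit (HX): a point $(a,y)$ where a horizontal segment ends; horizontal split (HS): exactly three segments, from the west, to the east and to the north; horizontal turn (HT): exactly a segment from the west and a segment to the north; horizontal coalescence (HC): exactly three segments, from the south, from the west and to the east; crossing (CR): four segments meeting (from west, from south, to north, to east).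 *)

theory Defs
  imports Complex_Main
begin

type_synonym pt = "real \<times> real"
type_synonym seg = "pt \<times> pt \<times> real"

definition src :: "seg \<Rightarrow> pt" where "src \<sigma> = fst \<sigma>"
definition tgt :: "seg \<Rightarrow> pt" where "tgt \<sigma> = fst (snd \<sigma>)"
definition intensity :: "seg \<Rightarrow> real" where "intensity \<sigma> = snd (snd \<sigma>)"

definition vert :: "seg \<Rightarrow> bool" where
  "vert \<sigma> \<longleftrightarrow> fst (src \<sigma>) = fst (tgt \<sigma>) \<and> snd (src \<sigma>) < snd (tgt \<sigma>)"
definition horiz :: "seg \<Rightarrow> bool" where
  "horiz \<sigma> \<longleftrightarrow> snd (src \<sigma>) = snd (tgt \<sigma>) \<and> fst (src \<sigma>) < fst (tgt \<sigma>)"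

definition in_box :: "real \<Rightarrow> real \<Rightarrow> pt \<Rightarrow> bool" where
  "in_box a b p \<longleftrightarrow> 0 \<le> fst p \<and> fst p \<le> a \<and> 0 \<le> snd p \<and> snd p \<le> b"

definition interior :: "real \<Rightarrow> real \<Rightarrow> pt \<Rightarrow> bool" where
  "interior a b p \<longleftrightarrow> 0 < fst p \<and> fst p < a \<and> 0 < snd p \<and> snd p < b"

definition nodes :: "seg set \<Rightarrow> pt set" where
  "nodes D = src ` D \<union> tgt ` D"

definition from_south :: "seg set \<Rightarrow> pt \<Rightarrow> seg set" where
  "from_south D p = {\<sigma>\<in>D. vert \<sigma> \<and> tgt \<sigma> = p}"
definition to_north :: "seg set \<Rightarrow> pt \<Rightarrow> seg set" where
  "to_north D p = {\<sigma>\<in>D. vert \<sigma> \<and> src \<sigma> = p}"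
definition from_west :: "seg set \<Rightarrow> pt \<Rightarrow> seg set" where
  "from_west D p = {\<sigma>\<in>D. horiz \<sigma> \<and> tgt \<sigma> = p}"
definition to_east :: "seg set \<Rightarrow> pt \<Rightarrow> seg set" where
  "to_east D p = {\<sigma>\<in>D. horiz \<sigma> \<and> src \<sigma> = p}"

definition drawing :: "real \<Rightarrow> real \<Rightarrow> seg set \<Rightarrow> bool" where
  "drawing a b D \<longleftrightarrow> finite D \<and>
     (\<forall>\<sigma>\<in>D. (vert \<sigma> \<or> horiz \<sigma>) \<and> in_box a b (src \<sigma>) \<and> in_box a b (tgt \<sigma>)) \<and>
     (\<forall>p\<in>nodes D. interior a b p \<longrightarrow>
        (\<Sum>\<sigma>\<in>from_south D p. intensity \<sigma>) + (\<Sum>\<sigma>\<in>from_west D p. intensity \<sigma>)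
      = (\<Sum>\<sigma>\<in>to_north D p. intensity \<sigma>) + (\<Sum>\<sigma>\<in>to_east D p. intensity \<sigma>))"

datatype ntype = VE | VX | VS | VT | VC | HE | HX | HS | HT | HC | CR

definition pattern :: "seg set \<Rightarrow> pt \<Rightarrow> nat \<Rightarrow> nat \<Rightarrow> nat \<Rightarrow> nat \<Rightarrow> bool" where
  "pattern D p s w n e \<longleftrightarrow> card (from_south D p) = s \<and> card (from_west D p) = w \<and>
     card (to_north D p) = n \<and> card (to_east D p) = e"

fun has_type :: "real \<Rightarrow> real \<Rightarrow> seg set \<Rightarrow> pt \<Rightarrow> ntype \<Rightarrow> bool" where
  "has_type a b D p VE \<longleftrightarrow> snd p = 0 \<and> pattern D p 0 0 1 0"
| "has_type a b D p VX \<longleftrightarrow> snd p = b \<and> pattern D p 1 0 0 0"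
| "has_type a b D p VS \<longleftrightarrow> pattern D p 1 0 1 1"
| "has_type a b D p VT \<longleftrightarrow> pattern D p 1 0 0 1"
| "has_type a b D p VC \<longleftrightarrow> pattern D p 1 1 1 0"
| "has_type a b D p HE \<longleftrightarrow> fst p = 0 \<and> pattern D p 0 0 0 1"
| "has_type a b D p HX \<longleftrightarrow> fst p = a \<and> pattern D p 0 1 0 0"
| "has_type a b D p HS \<longleftrightarrow> pattern D p 0 1 1 1"
| "has_type a b D p HT \<longleftrightarrow> pattern D p 0 1 1 0"
| "has_type a b D p HC \<longleftrightarrow> pattern D p 1 1 0 1"
| "has_type a b D p CR \<longleftrightarrow> pattern D p 1 1 1 1"

definition num_type :: "real \<Rightarrow> real \<Rightarrow> seg set \<Rightarrow> ntype \<Rightarrow> nat" where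
  "num_type a b D t = card {p\<in>nodes D. has_type a b D p t}"

end

theory Submission
  imports Defs
begin

definition Ts :: "ntype set" where
  "Ts = {VE, VX, VS, VT, VC, HE, HX, HS, HT, HC, CR}"

fun cS :: "ntype \<Rightarrow> nat" where
  "cS VE = 0" | "cS VX = 1" | "cS VS = 1" | "cS VT = 1" | "cS VC = 1" | "cS HE = 0"
| "cS HX = 0" | "cS HS = 0" | "cS HT = 0" | "cS HC = 1" | "cS CR = 1"
fun cW :: "ntype \<Rightarrow> nat" where
  "cW VE = 0" | "cW VX = 0" | "cW VS = 0" | "cW VT = 0" | "cW VC = 1" | "cW HE = 0"
| "cW HX = 1" | "cW HS = 1" | "cW HT = 1" | "cW HC = 1" | "cW CR = 1"
fun cN :: "ntype \<Rightarrow> nat" where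
  "cN VE = 1" | "cN VX = 0" | "cN VS = 1" | "cN VT = 0" | "cN VC = 1" | "cN HE = 0"
| "cN HX = 0" | "cN HS = 1" | "cN HT = 1" | "cN HC = 0" | "cN CR = 1"
fun cE :: "ntype \<Rightarrow> nat" where
  "cE VE = 0" | "cE VX = 0" | "cE VS = 1" | "cE VT = 1" | "cE VC = 0" | "cE HE = 1"
| "cE HX = 0" | "cE HS = 1" | "cE HT = 0" | "cE HC = 1" | "cE CR = 1"

lemma node_lemma:
  assumes "has_type a b D p t0"
  shows "card (from_south D p) = (\<Sum>t\<in>Ts. if has_type a b D p t then cS t else 0)
       \<and> card (from_west D p) = (\<Sum>t\<in>Ts. if has_type a b D p t then cW t else 0)
       \<and> card (to_north D p) = (\<Sum>t\<in>Ts. if has_type a b D p t then cN t else 0)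
       \<and> card (to_east D p) = (\<Sum>t\<in>Ts. if has_type a b D p t then cE t else 0)"
  using assms by (cases t0) (auto simp: Ts_def pattern_def)

lemma sum_types:
  assumes "\<forall>p\<in>N. \<exists>t. has_type a b D p t"
    and "\<And>p t. p \<in> N \<Longrightarrow> has_type a b D p t \<Longrightarrow> h p = (\<Sum>t\<in>Ts. if has_type a b D p t then c t else 0)"
    and "N = nodes D" and "finite N"
  shows "(\<Sum>p\<in>N. h p) = (\<Sum>t\<in>Ts. c t * num_type a b D t)"
proof -
  have "(\<Sum>p\<in>N. h p) = (\<Sum>p\<in>N. \<Sum>t\<in>Ts. if has_type a b D p t then c t else 0)"
    using assms(1,2) by (intro sum.cong) auto
  also have "\<dots> = (\<Sum>t\<in>Ts. \<Sum>p\<in>N. if has_type a b D p t then c t else 0)"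
    by (rule sum.swap)
  also have "\<dots> = (\<Sum>t\<in>Ts. c t * num_type a b D t)"
  proof (intro sum.cong refl)
    fix t
    have "(\<Sum>p\<in>N. if has_type a b D p t then c t else 0) = (\<Sum>p\<in>{p\<in>N. has_type a b D p t}. c t)"
      using assms(4) by (subst sum.inter_filter) auto
    also have "\<dots> = c t * num_type a b D t"
      using assms(3) by (simp add: num_type_def)
    finally show "(\<Sum>p\<in>N. if has_type a b D p t then c t else 0) = c t * num_type a b D t" .
  qed
  finally show ?thesis .
qed

lemma fin_nodes: "finite D \<Longrightarrow> finite (nodes D)"
  by (simp add: nodes_def)

lemma count_src:
  assumes "finite D"
  shows "card {\<sigma>\<in>D. P \<sigma>} = (\<Sum>p\<in>nodes D. card {\<sigma>\<in>D. P \<sigma> \<and> src \<sigma> = p})"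
proof -
  define S where "S = {\<sigma>\<in>D. P \<sigma>}"
  have S: "S \<subseteq> D" by (auto simp: S_def)
  have "S = (\<Union>p\<in>nodes D. {\<sigma>\<in>S. src \<sigma> = p})"
    using S by (auto simp: nodes_def)
  hence "card S = card (\<Union>p\<in>nodes D. {\<sigma>\<in>S. src \<sigma> = p})" by simp
  also have "\<dots> = (\<Sum>p\<in>nodes D. card {\<sigma>\<in>S. src \<sigma> = p})"
    using assms S by (intro card_UN_disjoint) (auto simp: fin_nodes intro: finite_subset)
  finally show ?thesis by (simp add: S_def)
qed

lemma count_tgt:
  assumes "finite D"
  shows "card {\<sigma>\<in>D. P \<sigma>} = (\<Sum>p\<in>nodes D. card {\<sigma>\<in>D. P \<sigma> \<and> tgt \<sigma> = p})"
proof -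
  define S where "S = {\<sigma>\<in>D. P \<sigma>}"
  have S: "S \<subseteq> D" by (auto simp: S_def)
  have "S = (\<Union>p\<in>nodes D. {\<sigma>\<in>S. tgt \<sigma> = p})"
    using S by (auto simp: nodes_def)
  hence "card S = card (\<Union>p\<in>nodes D. {\<sigma>\<in>S. tgt \<sigma> = p})" by simp
  also have "\<dots> = (\<Sum>p\<in>nodes D. card {\<sigma>\<in>S. tgt \<sigma> = p})"
    using assms S by (intro card_UN_disjoint) (auto simp: fin_nodes intro: finite_subset)
  finally show ?thesis by (simp add: S_def)
qed

theorem lemma1:
  fixes a b :: real and D :: "seg set"
  assumes "drawing a b D"
    and "\<forall>p\<in>nodes D. \<exists>t. has_type a b D p t"
  shows "(2 * card D =
      (num_type a b D VE + num_type a b D VX + 2 * num_type a b D VT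
         + 3 * num_type a b D VS + 3 * num_type a b D VC)
    + (num_type a b D HE + num_type a b D HX + 2 * num_type a b D HT
         + 3 * num_type a b D HS + 3 * num_type a b D HC)
    + 4 * num_type a b D CR)
    \<and> (num_type a b D VE + num_type a b D HS + num_type a b D HT
       = num_type a b D VX + num_type a b D HC + num_type a b D VT)
    \<and> (num_type a b D HE + num_type a b D VS + num_type a b D VT
       = num_type a b D HX + num_type a b D VC + num_type a b D HT)"
proof -
  have fin: "finite D" using assms(1) by (simp add: drawing_def)
  define V where "V = {\<sigma>\<in>D. vert \<sigma>}"
  define H where "H = {\<sigma>\<in>D. horiz \<sigma>}"
  have VH: "card D = card V + card H"
  proof -
    have "D = V \<union> H" using assms(1) by (auto simp: drawing_def V_def H_def)
    moreover have "V \<inter> H = {}" by (auto simp: V_def H_def vert_def horiz_def)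
    ultimately show ?thesis using fin
      by (metis card_Un_disjoint finite_Un)
  qed
  have e1: "card V = (\<Sum>p\<in>nodes D. card (to_north D p))"
    unfolding V_def to_north_def by (rule count_src[OF fin])
  have e2: "card V = (\<Sum>p\<in>nodes D. card (from_south D p))"
    unfolding V_def from_south_def by (rule count_tgt[OF fin])
  have e3: "card H = (\<Sum>p\<in>nodes D. card (to_east D p))"
    unfolding H_def to_east_def by (rule count_src[OF fin])
  have e4: "card H = (\<Sum>p\<in>nodes D. card (from_west D p))"
    unfolding H_def from_west_def by (rule count_tgt[OF fin])
  have f1: "card V = (\<Sum>t\<in>Ts. cN t * num_type a b D t)"
    unfolding e1 by (rule sum_types[OF assms(2)]) (use node_lemma fin fin_nodes in blast)+
  have f2: "card V = (\<Sum>t\<in>Ts. cS t * num_type a b D t)"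
    unfolding e2 by (rule sum_types[OF assms(2)]) (use node_lemma fin fin_nodes in blast)+
  have f3: "card H = (\<Sum>t\<in>Ts. cE t * num_type a b D t)"
    unfolding e3 by (rule sum_types[OF assms(2)]) (use node_lemma fin fin_nodes in blast)+
  have f4: "card H = (\<Sum>t\<in>Ts. cW t * num_type a b D t)"
    unfolding e4 by (rule sum_types[OF assms(2)]) (use node_lemma fin fin_nodes in blast)+
  have "2 * card D = card V + card V + card H + card H" using VH by simp
  note g = this f1 f2 f3 f4
  show ?thesis using g unfolding Ts_def by simp
qed

end
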